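(* Let $p_1,p_2,\dots$ be a sequence with $0\le p_j\le 1$ for all $j$, and let $I_1,I_2,\dots$ be independent Bernoulli random variables with $P(I_k=1)=p_k$. Put $q_k=1-p_k$, $r_k=p_k/q_k$ (with $r_k=\infty$ if $p_k=1$), and for $1\le k\le n$ let $R(1,n)=\sum_{j=1}^n r_j$. For each $n\ge1$ let $V(n)$ be the maximal probability, over all stopping times $\tau$ with respect to $\mathcal F_k=\sigma(I_1,\dots,I_k)$ taking values in $\{1,\dots,n\}$, that $I_\tau=1$ and $I_j=0$ for all $\tau<j\le n$. Let $$N^*=\sup\{n\in\mathbb N: R(1,n)\le 1\}\in\mathbb N\cup\{\infty\}.$$ Then $V(n)$ is non-decreasing in $n$ for $1\le n\le N^*$, i.e. $V(n)\le V(n+1)$ for every positive integer $n$ with $n+1\le N^*$.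
   Context: $V(n)$ is the optimal probability of stopping online (without recall) on the last index $k\le n$ with $I_k=1$ (the "$n$-problem"). *)

theory Defs
  imports "HOL-Probability.Probability" "HOL-Library.Extended_Nat" "HOL-Library.Extended_Real"
begin

text \<open>Outcomes are indicator sequences I :: nat => bool (I k = the k-th Bernoulli indicator,
  k >= 1). The joint law of I_1..I_n is the product of Bernoulli(p k) for k in {1..n}.\<close>

definition law :: "(nat \<Rightarrow> real) \<Rightarrow> nat \<Rightarrow> (nat \<Rightarrow> bool) pmf" where
  "law p n = Pi_pmf {1..n} False (\<lambda>k. bernoulli_pmf (p k))"

text \<open>Stopping times w.r.t. F_k = sigma(I_1..I_k) with values in {1..n}:
  the event {tau = k} is determined by I_1..I_k.\<close>

definition is_stopping_time :: "nat \<Rightarrow> ((nat \<Rightarrow> bool) \<Rightarrow> nat) \<Rightarrow> bool" where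
  "is_stopping_time n \<tau> \<longleftrightarrow>
     (\<forall>\<omega>. \<tau> \<omega> \<in> {1..n}) \<and>
     (\<forall>\<omega> \<omega>' k. \<tau> \<omega> = k \<and> (\<forall>j\<in>{1..k}. \<omega> j = \<omega>' j) \<longrightarrow> \<tau> \<omega>' = k)"

definition win_event :: "nat \<Rightarrow> ((nat \<Rightarrow> bool) \<Rightarrow> nat) \<Rightarrow> (nat \<Rightarrow> bool) set" where
  "win_event n \<tau> = {\<omega>. \<omega> (\<tau> \<omega>) \<and> (\<forall>j. \<tau> \<omega> < j \<and> j \<le> n \<longrightarrow> \<not> \<omega> j)}"

definition V :: "(nat \<Rightarrow> real) \<Rightarrow> nat \<Rightarrow> real" where
  "V p n = (SUP \<tau>\<in>{\<tau>. is_stopping_time n \<tau>}. measure_pmf.prob (law p n) (win_event n \<tau>))"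

definition odds :: "(nat \<Rightarrow> real) \<Rightarrow> nat \<Rightarrow> ereal" where
  "odds p k = (if p k = 1 then \<infinity> else ereal (p k / (1 - p k)))"

definition R :: "(nat \<Rightarrow> real) \<Rightarrow> nat \<Rightarrow> ereal" where
  "R p n = (\<Sum>j=1..n. odds p j)"

definition Nstar :: "(nat \<Rightarrow> real) \<Rightarrow> enat" where
  "Nstar p = Sup (enat ` {n. R p n \<le> 1})"

end

theory Submission
  imports Defs
begin

lemma pair_bern:
  assumes "0 \<le> q" "q \<le> 1"
  shows "measure_pmf.prob (pair_pmf (bernoulli_pmf q) B) X =
     q * measure_pmf.prob B {y. (True,y)\<in>X} + (1-q) * measure_pmf.prob B {y. (False,y)\<in>X}"
proof -
  have e: "emeasure (measure_pmf (bind_pmf B (\<lambda>y. return_pmf (x, y)))) X = emeasure (measure_pmf B) {y. (x,y)\<in>X}" for x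
    by (simp add: map_pmf_def[symmetric] vimage_def)
  have f: "(\<integral>\<^sup>+x. ennreal (indicator X (b,x)) \<partial>measure_pmf B) = emeasure (measure_pmf B) {y. (b,y)\<in>X}" for b
  proof -
    have "(\<lambda>x. ennreal (indicator X (b,x))) = (\<lambda>x. indicator {y. (b,y)\<in>X} x)"
      by (auto simp: indicator_def)
    then show ?thesis by simp
  qed
  have "emeasure (measure_pmf (pair_pmf (bernoulli_pmf q) B)) X
     = ennreal (measure_pmf.prob B {y. (True,y)\<in>X}) * ennreal q + ennreal (measure_pmf.prob B {y. (False,y)\<in>X}) * ennreal (1-q)"
    unfolding pair_pmf_def emeasure_bind_pmf e
    using assms by (simp add: f measure_pmf.emeasure_eq_measure)
  also have "\<dots> = ennreal (q * measure_pmf.prob B {y. (True,y)\<in>X} + (1-q) * measure_pmf.prob B {y. (False,y)\<in>X})"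
    using assms by (simp add: ennreal_mult'[symmetric] ennreal_plus[symmetric] mult.commute del: ennreal_plus)
  finally have "ennreal (measure_pmf.prob (pair_pmf (bernoulli_pmf q) B) X) = ennreal (q * measure_pmf.prob B {y. (True,y)\<in>X} + (1-q) * measure_pmf.prob B {y. (False,y)\<in>X})"
    by (simp only: measure_pmf.emeasure_eq_measure)
  then show ?thesis using assms
    by (subst (asm) ennreal_inj) auto
qed

definition L :: "(nat \<Rightarrow> real) \<Rightarrow> nat \<Rightarrow> nat \<Rightarrow> (nat \<Rightarrow> bool) pmf" where
  "L p a n = Pi_pmf {a..n} False (\<lambda>k. bernoulli_pmf (p k))"

definition cns :: "nat \<Rightarrow> bool \<Rightarrow> (nat \<Rightarrow> bool) \<Rightarrow> (nat \<Rightarrow> bool)" where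
  "cns a b \<omega> = (\<lambda>j. if j < a then False else if j = a then b else \<omega> j)"

lemma L_decomp:
  assumes "a \<le> n" "0 \<le> p a" "p a \<le> 1"
  shows "measure_pmf.prob (L p a n) S =
    p a * measure_pmf.prob (L p (Suc a) n) {\<omega>. cns a True \<omega> \<in> S}
    + (1 - p a) * measure_pmf.prob (L p (Suc a) n) {\<omega>. cns a False \<omega> \<in> S}"
proof -
  have ins: "{a..n} = insert a {Suc a..n}" using assms by auto
  have "L p a n = map_pmf (\<lambda>(y,f). f(a:=y)) (pair_pmf (bernoulli_pmf (p a)) (L p (Suc a) n))"
    unfolding L_def ins by (rule Pi_pmf_insert) auto
  also have "\<dots> = map_pmf (\<lambda>(y,f). cns a y f) (pair_pmf (bernoulli_pmf (p a)) (L p (Suc a) n))"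
  proof (rule map_pmf_cong[OF refl])
    fix x assume "x \<in> set_pmf (pair_pmf (bernoulli_pmf (p a)) (L p (Suc a) n))"
    then have "snd x \<in> set_pmf (L p (Suc a) n)" by auto
    then have "\<forall>j. j \<notin> {Suc a..n} \<longrightarrow> snd x j = False"
      using set_Pi_pmf_subset[of "{Suc a..n}" False] unfolding L_def by blast
    then show "(\<lambda>(y,f). f(a:=y)) x = (\<lambda>(y,f). cns a y f) x"
      by (cases x) (auto simp: cns_def fun_eq_iff)
  qed
  finally show ?thesis
    using assms by (simp add: pair_bern vimage_def)
qed

definition Qp :: "(nat \<Rightarrow> real) \<Rightarrow> nat \<Rightarrow> nat \<Rightarrow> real" where
  "Qp p a n = (\<Prod>j\<in>{a..n}. 1 - p j)"

definition Rr :: "(nat \<Rightarrow> real) \<Rightarrow> nat \<Rightarrow> nat \<Rightarrow> real" where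
  "Rr p a n = (\<Sum>j\<in>{a..n}. p j / (1 - p j))"

definition st :: "nat \<Rightarrow> nat \<Rightarrow> ((nat \<Rightarrow> bool) \<Rightarrow> nat) \<Rightarrow> bool" where
  "st a n \<tau> \<longleftrightarrow> (\<forall>\<omega>. \<tau> \<omega> \<in> {a..n}) \<and>
     (\<forall>\<omega> \<omega>' k. \<tau> \<omega> = k \<and> (\<forall>j\<in>{1..k}. \<omega> j = \<omega>' j) \<longrightarrow> \<tau> \<omega>' = k)"

lemma Qp_step: "a \<le> n \<Longrightarrow> Qp p a n = (1 - p a) * Qp p (Suc a) n"
  unfolding Qp_def by (simp add: prod.atLeast_Suc_atMost)

lemma Rr_step: "a \<le> n \<Longrightarrow> Rr p a n = p a / (1 - p a) + Rr p (Suc a) n"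
  unfolding Rr_def by (simp add: sum.atLeast_Suc_atMost)

lemma Qp_nonneg: "(\<And>j. j \<in> {a..n} \<Longrightarrow> p j \<le> 1) \<Longrightarrow> Qp p a n \<ge> 0"
  unfolding Qp_def by (rule prod_nonneg) auto

lemma Rr_nonneg: "(\<And>j. j \<in> {a..n} \<Longrightarrow> 0 \<le> p j \<and> p j < 1) \<Longrightarrow> Rr p a n \<ge> 0"
  unfolding Rr_def by (rule sum_nonneg) (metis atLeastAtMost_iff diff_ge_0_iff_ge divide_nonneg_nonneg less_eq_real_def)

lemma no_succ:
  assumes "\<And>j. j \<in> {a..n} \<Longrightarrow> 0 \<le> p j \<and> p j \<le> 1"
  shows "measure_pmf.prob (L p a n) {\<omega>. \<forall>j\<in>{a..n}. \<not> \<omega> j} = Qp p a n"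
proof -
  have "{\<omega>. \<forall>j\<in>{a..n}. \<not> \<omega> j} = Pi {a..n} (\<lambda>_. {False})" by (auto simp: Pi_def)
  then show ?thesis unfolding L_def Qp_def
    using assms by (simp add: measure_Pi_pmf_Pi measure_pmf_single)
qed

lemma upper:
  assumes "st a n \<tau>" "\<forall>j\<in>{a..n}. 0 \<le> p j \<and> p j < 1" "Rr p a n \<le> 1"
  shows "measure_pmf.prob (L p a n) (win_event n \<tau>) \<le> Qp p a n * Rr p a n"
  using assms
proof (induction "Suc n - a" arbitrary: a \<tau>)
  case 0
  then show ?case unfolding st_def by (metis atLeastAtMost_iff diff_is_0_eq not_less_eq_eq order_trans)
next
  case (Suc d)
  have an: "a \<le> n" using Suc.prems(1) unfolding st_def by (meson atLeastAtMost_iff order_trans)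
  let ?W = "win_event n \<tau>"
  define Q' where "Q' = Qp p (Suc a) n"
  define R' where "R' = Rr p (Suc a) n"
  have pa: "0 \<le> p a" "p a < 1" using Suc.prems(2) an by auto
  have hyp2: "\<forall>j\<in>{Suc a..n}. 0 \<le> p j \<and> p j < 1" using Suc.prems(2) by auto
  have ra: "p a / (1 - p a) \<ge> 0" using pa by simp
  have hyp3: "R' \<le> 1" using Suc.prems(3) Rr_step[OF an, of p] ra unfolding R'_def by linarith
  have pj1: "p j \<le> 1" if "j \<in> {Suc a..n}" for j
  proof -
    have "p j < 1" using hyp2 that by blast
    then show ?thesis by simp
  qed
  have Q'0: "Q' \<ge> 0" unfolding Q'_def using pj1 by (rule Qp_nonneg)
  have R'0: "R' \<ge> 0" unfolding R'_def using hyp2 by (intro Rr_nonneg) auto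
  have QR: "Q' * R' \<le> Q'" using Q'0 hyp3 by (simp add: mult_left_le)
  have key: "measure_pmf.prob (L p (Suc a) n) {\<omega>. cns a b \<omega> \<in> ?W} \<le> (if b then Q' else Q' * R')" for b
  proof (cases "\<exists>\<omega>. \<tau> (cns a b \<omega>) = a")
    case True
    then obtain \<omega>0 where w0: "\<tau> (cns a b \<omega>0) = a" by blast
    have stp: "\<And>\<omega> \<omega>' k. \<tau> \<omega> = k \<Longrightarrow> (\<forall>j\<in>{1..k}. \<omega> j = \<omega>' j) \<Longrightarrow> \<tau> \<omega>' = k"
      using Suc.prems(1) unfolding st_def by blast
    have all: "\<tau> (cns a b \<omega>) = a" for \<omega>
    proof (rule stp[OF w0])
      show "\<forall>j\<in>{1..a}. cns a b \<omega>0 j = cns a b \<omega> j" by (auto simp: cns_def)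
    qed
    have "{\<omega>. cns a b \<omega> \<in> ?W} = (if b then {\<omega>. \<forall>j\<in>{Suc a..n}. \<not> \<omega> j} else {})"
      using all by (auto simp: win_event_def cns_def)
    moreover have "measure_pmf.prob (L p (Suc a) n) {\<omega>. \<forall>j\<in>{Suc a..n}. \<not> \<omega> j} = Q'"
      unfolding Q'_def by (rule no_succ) (use hyp2 pj1 in auto)
    ultimately show ?thesis using Q'0 R'0 by auto
  next
    case False
    define \<tau>' where "\<tau>' = (\<lambda>\<omega>. \<tau> (cns a b \<omega>))"
    have rng: "\<tau>' \<omega> \<in> {Suc a..n}" for \<omega>
    proof -
      have "\<tau> (cns a b \<omega>) \<in> {a..n}" using Suc.prems(1) unfolding st_def by blast
      moreover have "\<tau> (cns a b \<omega>) \<noteq> a" using False by blast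
      ultimately show ?thesis unfolding \<tau>'_def by auto
    qed
    have stp: "\<And>\<omega> \<omega>' k. \<tau> \<omega> = k \<Longrightarrow> (\<forall>j\<in>{1..k}. \<omega> j = \<omega>' j) \<Longrightarrow> \<tau> \<omega>' = k"
      using Suc.prems(1) unfolding st_def by blast
    have "st (Suc a) n \<tau>'"
      unfolding st_def
    proof (intro conjI allI impI)
      fix \<omega> \<omega>' k assume h: "\<tau>' \<omega> = k \<and> (\<forall>j\<in>{1..k}. \<omega> j = \<omega>' j)"
      then have "\<forall>j\<in>{1..k}. cns a b \<omega> j = cns a b \<omega>' j" by (auto simp: cns_def)
      then show "\<tau>' \<omega>' = k" using h stp unfolding \<tau>'_def by blast
    qed (use rng in auto)
    moreover have "{\<omega>. cns a b \<omega> \<in> ?W} = win_event n \<tau>'"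
    proof -
      have "cns a b \<omega> \<in> ?W \<longleftrightarrow> \<omega> \<in> win_event n \<tau>'" for \<omega>
      proof -
        have r: "Suc a \<le> \<tau>' \<omega>" using rng[of \<omega>] by auto
        have e0: "\<tau> (cns a b \<omega>) = \<tau>' \<omega>" by (simp add: \<tau>'_def)
        have e1: "cns a b \<omega> (\<tau>' \<omega>) = \<omega> (\<tau>' \<omega>)" using r by (simp add: cns_def)
        have e2: "\<And>j. \<tau>' \<omega> < j \<Longrightarrow> cns a b \<omega> j = \<omega> j" using r by (simp add: cns_def)
        show ?thesis unfolding win_event_def mem_Collect_eq e0 e1 using e2 by auto
      qed
      then show ?thesis by auto
    qed
    moreover have "d = Suc n - Suc a" using Suc.hyps(2) by simp
    moreover have "Rr p (Suc a) n \<le> 1" using hyp3 unfolding R'_def .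
    ultimately have "measure_pmf.prob (L p (Suc a) n) {\<omega>. cns a b \<omega> \<in> ?W} \<le> Q' * R'"
      using Suc.hyps(1)[of "Suc a" \<tau>'] hyp2 unfolding Q'_def R'_def by simp
    then show ?thesis using QR by auto
  qed
  have "measure_pmf.prob (L p a n) ?W \<le> p a * Q' + (1 - p a) * (Q' * R')"
    unfolding L_decomp[of a n p, OF an pa(1) less_imp_le[OF pa(2)]]
    using key[of True] key[of False] pa
    by (intro add_mono mult_left_mono) auto
  also have "\<dots> = Qp p a n * Rr p a n"
    unfolding Qp_step[OF an] Rr_step[OF an] Q'_def[symmetric] R'_def[symmetric]
    using pa by (simp add: field_simps)
  finally show ?case .
qed


definition fs :: "nat \<Rightarrow> nat \<Rightarrow> (nat \<Rightarrow> bool) \<Rightarrow> nat" where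
  "fs a n \<omega> = (if \<exists>j\<in>{a..n}. \<omega> j then Min {j\<in>{a..n}. \<omega> j} else n)"

lemma fs_range: "a \<le> n \<Longrightarrow> fs a n \<omega> \<in> {a..n}"
proof (cases "\<exists>j\<in>{a..n}. \<omega> j")
  case True
  then have "Min {j\<in>{a..n}. \<omega> j} \<in> {j\<in>{a..n}. \<omega> j}" by (intro Min_in) auto
  then show ?thesis using True unfolding fs_def by auto
qed (auto simp: fs_def)

lemma fs_st: assumes "1 \<le> a" "a \<le> n" shows "st a n (fs a n)"
  unfolding st_def
proof (intro conjI allI impI)
  fix \<omega> show "fs a n \<omega> \<in> {a..n}" using fs_range assms(2) .
next
  fix \<omega> \<omega>' k assume h: "fs a n \<omega> = k \<and> (\<forall>j\<in>{1..k}. \<omega> j = \<omega>' j)"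
  show "fs a n \<omega>' = k"
  proof (cases "\<exists>j\<in>{a..n}. \<omega> j")
    case True
    let ?S = "{j\<in>{a..n}. \<omega> j}"
    have fin: "finite ?S" by simp
    have ne: "?S \<noteq> {}" using True by blast
    have kdef: "k = Min ?S" using True h unfolding fs_def by simp
    have kS: "k \<in> ?S" unfolding kdef using fin ne by (rule Min_in)
    have kmin: "\<And>j. j \<in> ?S \<Longrightarrow> k \<le> j" unfolding kdef using fin by (rule Min_le)
    have k1: "1 \<le> k" using kS assms(1) by auto
    have wk: "\<omega>' k" using kS h k1 by auto
    have ex': "\<exists>j\<in>{a..n}. \<omega>' j" using kS wk by auto
    have "Min {j\<in>{a..n}. \<omega>' j} = k"
    proof (rule Min_eqI)
      show "k \<in> {j\<in>{a..n}. \<omega>' j}" using kS wk by auto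
    next
      fix y assume y: "y \<in> {j\<in>{a..n}. \<omega>' j}"
      show "k \<le> y"
      proof (rule ccontr)
        assume "\<not> k \<le> y"
        then have "y \<in> {1..k}" using y assms(1) by auto
        then have "\<omega> y" using h y by auto
        then have "k \<le> y" using kmin y by auto
        then show False using \<open>\<not> k \<le> y\<close> by simp
      qed
    qed simp
    then show ?thesis using ex' unfolding fs_def by simp
  next
    case False
    then have kn: "k = n" using h unfolding fs_def by auto
    have "\<not> (\<exists>j\<in>{a..n}. \<omega>' j)" using False h kn assms(1) by auto
    then show ?thesis using kn unfolding fs_def by simp
  qed
qed

lemma lower:
  assumes "a \<le> n" "\<forall>j\<in>{a..n}. 0 \<le> p j \<and> p j < 1"
  shows "measure_pmf.prob (L p a n) (win_event n (fs a n)) = Qp p a n * Rr p a n"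
  using assms
proof (induction "Suc n - a" arbitrary: a)
  case 0
  then show ?case by simp
next
  case (Suc d)
  have an: "a \<le> n" by fact
  let ?W = "win_event n (fs a n)"
  define Q' where "Q' = Qp p (Suc a) n"
  define R' where "R' = Rr p (Suc a) n"
  have pa: "0 \<le> p a" "p a < 1" using Suc.prems(2) an by auto
  have hyp2: "\<forall>j\<in>{Suc a..n}. 0 \<le> p j \<and> p j < 1" using Suc.prems(2) by auto
  have pj1: "0 \<le> p j \<and> p j \<le> 1" if "j \<in> {Suc a..n}" for j
  proof -
    have "0 \<le> p j \<and> p j < 1" using hyp2 that by blast
    then show ?thesis by simp
  qed
  have kT: "measure_pmf.prob (L p (Suc a) n) {\<omega>. cns a True \<omega> \<in> ?W} = Q'"
  proof -
    have f: "fs a n (cns a True \<omega>) = a" for \<omega>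
    proof -
      have "Min {j\<in>{a..n}. cns a True \<omega> j} = a"
        proof (rule Min_eqI)
          show "a \<in> {j\<in>{a..n}. cns a True \<omega> j}" using an by (simp add: cns_def)
        qed auto
      then show ?thesis using an unfolding fs_def by (auto simp: cns_def)
    qed
    have "{\<omega>. cns a True \<omega> \<in> ?W} = {\<omega>. \<forall>j\<in>{Suc a..n}. \<not> \<omega> j}"
      proof (intro set_eqI iffI)
        fix \<omega> assume "\<omega> \<in> {\<omega>. cns a True \<omega> \<in> ?W}"
        then show "\<omega> \<in> {\<omega>. \<forall>j\<in>{Suc a..n}. \<not> \<omega> j}"
          unfolding win_event_def mem_Collect_eq f by (simp add: cns_def)
      next
        fix \<omega> assume "\<omega> \<in> {\<omega>. \<forall>j\<in>{Suc a..n}. \<not> \<omega> j}"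
        then show "\<omega> \<in> {\<omega>. cns a True \<omega> \<in> ?W}"
          unfolding win_event_def mem_Collect_eq f by (simp add: cns_def)
      qed
    then show ?thesis unfolding Q'_def using no_succ[of "Suc a" n p] pj1 by simp
  qed
  have kF: "measure_pmf.prob (L p (Suc a) n) {\<omega>. cns a False \<omega> \<in> ?W} = Q' * R'"
  proof (cases "a = n")
    case True
    have f: "fs a n (cns a False \<omega>) = n" for \<omega>
      unfolding fs_def using True by (auto simp: cns_def)
    have "{\<omega>. cns a False \<omega> \<in> ?W} = {}"
      unfolding win_event_def mem_Collect_eq f using True by (simp add: cns_def)
    moreover have "R' = 0" unfolding R'_def Rr_def using True by simp
    ultimately show ?thesis by simp
  next
    case False
    then have an': "Suc a \<le> n" using an by simp
    have f: "fs a n (cns a False \<omega>) = fs (Suc a) n \<omega>" for \<omega>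
    proof -
      have "{j\<in>{a..n}. cns a False \<omega> j} = {j\<in>{Suc a..n}. \<omega> j}"
        by (auto simp: cns_def)
      moreover have "(\<exists>j\<in>{a..n}. cns a False \<omega> j) = (\<exists>j\<in>{Suc a..n}. \<omega> j)"
        using calculation by blast
      ultimately show ?thesis unfolding fs_def by simp
    qed
    have "{\<omega>. cns a False \<omega> \<in> ?W} = win_event n (fs (Suc a) n)"
    proof -
      have "cns a False \<omega> \<in> ?W \<longleftrightarrow> \<omega> \<in> win_event n (fs (Suc a) n)" for \<omega>
      proof -
        have r: "Suc a \<le> fs (Suc a) n \<omega>" using fs_range[OF an'] by auto
        have e1: "cns a False \<omega> (fs (Suc a) n \<omega>) = \<omega> (fs (Suc a) n \<omega>)" using r by (simp add: cns_def)
        have e2: "\<And>j. fs (Suc a) n \<omega> < j \<Longrightarrow> cns a False \<omega> j = \<omega> j" using r by (simp add: cns_def)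
        show ?thesis unfolding win_event_def mem_Collect_eq f e1 using e2 by auto
      qed
      then show ?thesis by auto
    qed
    moreover have "d = Suc n - Suc a" using Suc.hyps(2) by simp
    ultimately show ?thesis
      using Suc.hyps(1)[of "Suc a"] an' hyp2 unfolding Q'_def R'_def by simp
  qed
  have "measure_pmf.prob (L p a n) ?W = p a * Q' + (1 - p a) * (Q' * R')"
    unfolding L_decomp[of a n p, OF an pa(1) less_imp_le[OF pa(2)]] kT kF ..
  also have "\<dots> = Qp p a n * Rr p a n"
    unfolding Qp_step[OF an] Rr_step[OF an] Q'_def[symmetric] R'_def[symmetric]
    using pa by (simp add: field_simps)
  finally show ?case .
qed


lemma st_iff: "st 1 n \<tau> = is_stopping_time n \<tau>"
  unfolding st_def is_stopping_time_def ..

lemma law_L: "law p n = L p 1 n"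
  unfolding law_def L_def ..

lemma odds_nonneg: "0 \<le> p j \<Longrightarrow> p j \<le> 1 \<Longrightarrow> 0 \<le> odds p j"
  unfolding odds_def by auto

theorem lemma3p1:
  fixes p :: "nat \<Rightarrow> real" and n :: nat
  assumes "\<And>j. 0 \<le> p j \<and> p j \<le> 1"
    and "n \<ge> 1"
    and "enat (n + 1) \<le> Nstar p"
  shows "V p n \<le> V p (n + 1)"
proof -
  have "enat n < Sup (enat ` {n. R p n \<le> 1})"
    using assms(3) unfolding Nstar_def by (meson enat_ord_simps(2) less_add_one less_le_trans)
  then obtain m where m: "R p m \<le> 1" "n < m"
    unfolding less_Sup_iff by auto
  have p1: "p j < 1" if "j \<in> {1..m}" for j
  proof -
    have "R p m = odds p j + (\<Sum>i\<in>{1..m} - {j}. odds p i)" unfolding R_def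
      using that by (subst sum.remove) auto
    moreover have "(\<Sum>i\<in>{1..m} - {j}. odds p i) \<ge> 0"
      by (rule sum_nonneg) (use assms(1) odds_nonneg in auto)
    ultimately have "odds p j \<le> R p m"
      by (metis add_increasing2 order_refl)
    then have "odds p j \<le> 1" using m(1) by simp
    then have "p j \<noteq> 1" unfolding odds_def by auto
    then show ?thesis using assms(1)[of j] by simp
  qed
  have "R p m = ereal (Rr p 1 m)"
    unfolding R_def Rr_def sum_ereal[symmetric] using p1
  proof (intro sum.cong refl)
    fix x assume "x \<in> {1..m}"
    then have "p x \<noteq> 1" using p1[of x] by linarith
    then show "odds p x = ereal (p x / (1 - p x))" by (simp add: odds_def)
  qed
  then have Rm: "Rr p 1 m \<le> 1" using m(1) by simp
  have rn: "0 \<le> p j / (1 - p j)" if "j \<in> {1..m}" for j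
    using p1[OF that] assms(1)[of j] by simp
  have R1: "Rr p 1 (Suc n) \<le> 1"
  proof -
    have "Rr p 1 (Suc n) \<le> Rr p 1 m" unfolding Rr_def
      by (rule sum_mono2) (use m(2) rn in auto)
    then show ?thesis using Rm by simp
  qed
  have hyp1: "\<forall>j\<in>{1..Suc n}. 0 \<le> p j \<and> p j < 1" using p1 assms(1) m(2) by auto
  have hyp0: "\<forall>j\<in>{1..n}. 0 \<le> p j \<and> p j < 1" using hyp1 by auto
  have Rsplit: "Rr p 1 (Suc n) = Rr p 1 n + p (Suc n) / (1 - p (Suc n))"
    unfolding Rr_def by simp
  have Qsplit: "Qp p 1 (Suc n) = Qp p 1 n * (1 - p (Suc n))"
    unfolding Qp_def by simp
  have q: "0 \<le> p (Suc n)" "p (Suc n) < 1" using hyp1 by auto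
  have "p (Suc n) / (1 - p (Suc n)) \<ge> 0" using q by simp
  then have R0: "Rr p 1 n \<le> 1" using R1 Rsplit by linarith
  have Q0: "0 \<le> Qp p 1 n" by (rule Qp_nonneg) (use assms(1) in auto)
  have mono: "Qp p 1 n * Rr p 1 n \<le> Qp p 1 (Suc n) * Rr p 1 (Suc n)"
  proof -
    have "Qp p 1 (Suc n) * Rr p 1 (Suc n) - Qp p 1 n * Rr p 1 n
        = Qp p 1 n * (p (Suc n) * (1 - Rr p 1 n))"
      unfolding Qsplit Rsplit using q by (simp add: field_simps)
    also have "\<dots> \<ge> 0" using Q0 q R0 by simp
    finally show ?thesis by simp
  qed
  have Vn: "V p n \<le> Qp p 1 n * Rr p 1 n"
    unfolding V_def
  proof (rule cSUP_least)
    show "{\<tau>. is_stopping_time n \<tau>} \<noteq> {}"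
    proof -
      have "is_stopping_time n (\<lambda>_. n)" using assms(2) unfolding is_stopping_time_def by auto
      then show ?thesis by blast
    qed
  next
    fix \<tau> assume "\<tau> \<in> {\<tau>. is_stopping_time n \<tau>}"
    then have "st 1 n \<tau>" using st_iff by simp
    then show "measure_pmf.prob (law p n) (win_event n \<tau>) \<le> Qp p 1 n * Rr p 1 n"
      unfolding law_L using upper hyp0 R0 by blast
  qed
  have Vn1: "Qp p 1 (Suc n) * Rr p 1 (Suc n) \<le> V p (n + 1)"
  proof -
    have "Qp p 1 (Suc n) * Rr p 1 (Suc n) = measure_pmf.prob (law p (Suc n)) (win_event (Suc n) (fs 1 (Suc n)))"
      unfolding law_L using lower[of 1 "Suc n" p] hyp1 by simp
    also have "\<dots> \<le> V p (Suc n)"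
      unfolding V_def
    proof (rule cSUP_upper)
      show "fs 1 (Suc n) \<in> {\<tau>. is_stopping_time (Suc n) \<tau>}"
        using fs_st[of 1 "Suc n"] st_iff by simp
      show "bdd_above ((\<lambda>\<tau>. measure_pmf.prob (law p (Suc n)) (win_event (Suc n) \<tau>)) ` {\<tau>. is_stopping_time (Suc n) \<tau>})"
        by (rule bdd_aboveI[of _ 1]) auto
    qed
    finally show ?thesis by simp
  qed
  show ?thesis using Vn mono Vn1 by simp
qed

end
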